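(* Let $\rho_n$ ($n\ge0$) be constants, and for each pair $s,\delta>0$ with $1/s$ an integer and $\delta<s/2$ let $A=A_{s,\delta}$ be a $C^\infty$ diffeomorphism of $[0,1]$ such that: $A=\mathrm{Id}+a$ with $a$ a non-negative $C^\infty$ function of period $s$; $A(0)=0$, $A(\delta)=s-\delta$, $A(s)=s$; $\delta/(2s)\le A'\le 2s/\delta$; and $\|A\|_n\le\rho_n/\delta^{n^2}$ for every $n\ge0$. Then for any $n\ge0$ and any $C^n$ diffeomorphism $h$ of $[0,1]$ (equivalently of the circle $\mathbb R/\mathbb Z\cong[0,1]$) there is a constant $\tilde c(h,n)$, depending on $h$ and $n$ but not on $\delta$ and $s$, such that $$\|A_{s,\delta}\circ h\|_n\le \tilde c(h,n)/\delta^{n^2}$$ for all such $s,\delta$.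
   Context: For a $C^n$ diffeomorphism $g$ of $[0,1]$, $\|g\|_n^*=\max|g^{(i)}(x)|$, the maximum over all $x\in[0,1]$ and $0\le i\le n$, and $\|g\|_n=\max\{\|g\|_n^*,\|g^{-1}\|_n^*\}$. *)

theory Defs
  imports "HOL-Analysis.Analysis"
begin

definition hder01 :: "nat \<Rightarrow> (real \<Rightarrow> real) \<Rightarrow> real \<Rightarrow> real" where
  "hder01 i g = ((\<lambda>f x. vector_derivative f (at x within {0..1})) ^^ i) g"

definition Cn01 :: "nat \<Rightarrow> (real \<Rightarrow> real) \<Rightarrow> bool" where
  "Cn01 n g \<longleftrightarrow>
     (\<forall>i<n. \<forall>x\<in>{0..1}. hder01 i g differentiable (at x within {0..1})) \<and>
     (\<forall>i\<le>n. continuous_on {0..1} (hder01 i g))"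

definition diffeo01 :: "nat \<Rightarrow> (real \<Rightarrow> real) \<Rightarrow> bool" where
  "diffeo01 n g \<longleftrightarrow> bij_betw g {0..1} {0..1} \<and> Cn01 n g \<and> Cn01 n (inv_into {0..1} g)"

definition smooth_diffeo01 :: "(real \<Rightarrow> real) \<Rightarrow> bool" where
  "smooth_diffeo01 g \<longleftrightarrow> (\<forall>n. diffeo01 n g)"

definition norm_star :: "nat \<Rightarrow> (real \<Rightarrow> real) \<Rightarrow> real" where
  "norm_star n g = Sup {\<bar>hder01 i g x\<bar> | i x. i \<le> n \<and> x \<in> {0..1}}"

definition dnorm :: "nat \<Rightarrow> (real \<Rightarrow> real) \<Rightarrow> real" where
  "dnorm n g = max (norm_star n g) (norm_star n (inv_into {0..1} g))"

definition smooth_real :: "(real \<Rightarrow> real) \<Rightarrow> bool" where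
  "smooth_real a \<longleftrightarrow> (\<forall>k x. (deriv ^^ k) a differentiable (at x))"

definition admissible :: "real \<Rightarrow> real \<Rightarrow> bool" where
  "admissible s \<delta> \<longleftrightarrow> s > 0 \<and> \<delta> > 0 \<and> (\<exists>k::nat. k > 0 \<and> s = 1 / real k) \<and> \<delta> < s / 2"

end

theory Submission
  imports Defs
begin


type_synonym fterm = "real \<times> nat \<times> nat list"

fun stepT :: "fterm \<Rightarrow> fterm list" where
 "stepT (c,j,ks) = (c, Suc j, 1 # ks) # map (\<lambda>m. (c, j, ks[m := Suc (ks!m)])) [0..<length ks]"

fun FdB :: "nat \<Rightarrow> fterm list" where
 "FdB 0 = [(1,0,[])]" | "FdB (Suc i) = concat (map stepT (FdB i))"

definition evT :: "(real\<Rightarrow>real) \<Rightarrow> (real\<Rightarrow>real) \<Rightarrow> real \<Rightarrow> fterm \<Rightarrow> real" where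
 "evT f g x t = (case t of (c,j,ks) \<Rightarrow> c * hder01 j f (g x) * prod_list (map (\<lambda>k. hder01 k g x) ks))"

lemma sum_list_upd_Suc: "m < length ks \<Longrightarrow> sum_list (ks[m := Suc (ks!m)]) = Suc (sum_list ks)"
proof (induction ks arbitrary: m)
  case Nil then show ?case by simp
next
  case (Cons a ks) then show ?case by (cases m) auto
qed

lemma length_le_sum_list: "\<forall>k\<in>set ks. (0::nat) < k \<Longrightarrow> length ks \<le> sum_list ks"
  by (induction ks) auto

lemma sq_sum_list: "sum_list (map (\<lambda>k::nat. k^2) ks) \<le> (sum_list ks)^2"
proof (induction ks)
  case Nil then show ?case by simp
next
  case (Cons a ks)
  have "(a + sum_list ks)^2 = a^2 + 2*a* sum_list ks + (sum_list ks)^2" by (simp add: power2_sum)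
  then show ?case using Cons by simp
qed

lemma FdB_inv: "(c,j,ks) \<in> set (FdB i) \<Longrightarrow> length ks = j \<and> sum_list ks = i \<and> (\<forall>k\<in>set ks. 0<k)"
proof (induction i arbitrary: c j ks)
  case 0 then show ?case by simp
next
  case (Suc i)
  then obtain t where t: "t \<in> set (FdB i)" "(c,j,ks) \<in> set (stepT t)" by auto
  obtain c' j' ks' where tt: "t = (c',j',ks')" by (cases t) auto
  have IH: "length ks' = j' \<and> sum_list ks' = i \<and> (\<forall>k\<in>set ks'. 0<k)" using Suc.IH t tt by blast
  from t(2) tt have "(c,j,ks) = (c', Suc j', 1#ks') \<or> (\<exists>m<length ks'. (c,j,ks) = (c',j',ks'[m := Suc (ks'!m)]))"
    by auto
  then show ?case
  proof
    assume "(c,j,ks) = (c', Suc j', 1#ks')" then show ?thesis using IH by auto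
  next
    assume "\<exists>m<length ks'. (c,j,ks) = (c',j',ks'[m := Suc (ks'!m)])"
    then obtain m where m: "m < length ks'" "(c,j,ks) = (c',j',ks'[m := Suc (ks'!m)])" by blast
    have "set ks \<subseteq> insert (Suc (ks'!m)) (set ks')" using m(2) set_update_subset_insert[of ks' m "Suc (ks'!m)"] by simp
    then show ?thesis using IH m sum_list_upd_Suc[OF m(1)] by auto
  qed
qed

lemma prod_rule:
  assumes "\<And>k. k \<in> set ks \<Longrightarrow> ((G k) has_field_derivative G (Suc k) x) (at x within S)"
  shows "((\<lambda>y. prod_list (map (\<lambda>k. G k y) ks)) has_field_derivative
     sum_list (map (\<lambda>m. prod_list (map (\<lambda>k. G k x) (ks[m := Suc (ks!m)]))) [0..<length ks])) (at x within S)"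
  using assms
proof (induction ks)
  case Nil then show ?case by simp
next
  case (Cons a ks)
  have IH: "((\<lambda>y. prod_list (map (\<lambda>k. G k y) ks)) has_field_derivative
     sum_list (map (\<lambda>m. prod_list (map (\<lambda>k. G k x) (ks[m := Suc (ks!m)]))) [0..<length ks])) (at x within S)"
    using Cons by auto
  have Ga: "(G a has_field_derivative G (Suc a) x) (at x within S)" using Cons.prems by auto
  have "((\<lambda>y. G a y * prod_list (map (\<lambda>k. G k y) ks)) has_field_derivative
     G (Suc a) x * prod_list (map (\<lambda>k. G k x) ks) + sum_list (map (\<lambda>m. prod_list (map (\<lambda>k. G k x) (ks[m := Suc (ks!m)]))) [0..<length ks]) * G a x) (at x within S)"
    by (rule DERIV_mult[OF Ga IH])
  moreover have "[0..<length (a#ks)] = 0 # map Suc [0..<length ks]"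
    by (simp add: map_Suc_upt upt_conv_Cons del: upt_Suc)
  ultimately show ?case
    by (simp add: o_def sum_list_const_mult[symmetric] algebra_simps)
qed




lemma hder01_0[simp]: "hder01 0 g = g" by (simp add: hder01_def)
lemma hder01_Suc: "hder01 (Suc i) g x = vector_derivative (hder01 i g) (at x within {0..1})"
  by (simp add: hder01_def)

lemma Cn01_deriv:
  assumes "Cn01 n g" "i < n" "x \<in> {0..1}"
  shows "(hder01 i g has_field_derivative hder01 (Suc i) g x) (at x within {0..1})"
proof -
  have "hder01 i g differentiable (at x within {0..1})" using assms unfolding Cn01_def by blast
  then have "(hder01 i g has_vector_derivative vector_derivative (hder01 i g) (at x within {0..1})) (at x within {0..1})"
    using vector_derivative_works by blast
  then show ?thesis by (simp add: hder01_Suc has_real_derivative_iff_has_vector_derivative)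
qed

lemma hder01_Suc_eq:
  assumes "\<forall>y\<in>{0..1}. hder01 i F y = P y" "(P has_field_derivative D) (at x within {0..1})" "x \<in> {0..1}"
  shows "hder01 (Suc i) F x = D"
proof -
  have "(hder01 i F has_field_derivative D) (at x within {0..1})"
    by (rule has_field_derivative_transform_within[OF assms(2) zero_less_one assms(3)]) (use assms(1) in auto)
  then have "(hder01 i F has_vector_derivative D) (at x within cbox 0 1)"
    by (simp add: has_real_derivative_iff_has_vector_derivative)
  then have "vector_derivative (hder01 i F) (at x within cbox 0 1) = D"
    by (rule vector_derivative_within_cbox[rotated 2]) (use assms(3) in auto)
  then show ?thesis by (simp add: hder01_Suc)
qed

lemma sum_list_deriv:
  assumes "\<And>t. t \<in> set ts \<Longrightarrow> ((\<lambda>y. E t y) has_field_derivative D t) (at x within S)"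
  shows "((\<lambda>y. sum_list (map (\<lambda>t. E t y) ts)) has_field_derivative sum_list (map D ts)) (at x within S)"
  using assms
proof (induction ts)
  case Nil then show ?case by simp
next
  case (Cons a ts) then show ?case by (auto intro!: DERIV_add)
qed

lemma sum_list_concat_map: "sum_list (map E (concat (map St ts))) = sum_list (map (\<lambda>t. sum_list (map E (St t))) ts)"
  by (induction ts) auto

lemma chain_FdB:
  assumes Cf: "Cn01 n f" and Cg: "Cn01 n g" and gS: "g ` {0..1} \<subseteq> {0..1}"
    and F: "\<forall>x\<in>{0..1}. F x = f (g x)"
  shows "i \<le> n \<Longrightarrow> x \<in> {0..1} \<Longrightarrow> hder01 i F x = sum_list (map (evT f g x) (FdB i))"
proof (induction i arbitrary: x)
  case 0 then show ?case using F by (simp add: evT_def)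
next
  case (Suc i)
  have IH: "\<forall>y\<in>{0..1}. hder01 i F y = sum_list (map (\<lambda>t. evT f g y t) (FdB i))"
    using Suc by auto
  have gx: "g x \<in> {0..1}" using gS Suc.prems using image_subset_iff by blast
  have trm: "((\<lambda>y. evT f g y t) has_field_derivative sum_list (map (evT f g x) (stepT t))) (at x within {0..1})"
    if t: "t \<in> set (FdB i)" for t
  proof -
    obtain c j ks where tt: "t = (c,j,ks)" by (cases t) auto
    have inv: "length ks = j \<and> sum_list ks = i \<and> (\<forall>k\<in>set ks. 0<k)" using FdB_inv t tt by blast
    have ji: "j \<le> i" using inv length_le_sum_list by metis
    have ksi: "k \<le> i" if "k \<in> set ks" for k using inv member_le_sum_list[of k ks] that by auto
    have Dg: "(g has_field_derivative hder01 1 g x) (at x within {0..1})"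
      using Cn01_deriv[OF Cg, of 0 x] Suc.prems by simp
    have Df: "(hder01 j f has_field_derivative hder01 (Suc j) f (g x)) (at (g x) within g ` {0..1})"
      by (rule DERIV_subset[OF Cn01_deriv[OF Cf _ gx] gS]) (use ji Suc.prems in auto)
    have Dfg: "((\<lambda>y. hder01 j f (g y)) has_field_derivative hder01 (Suc j) f (g x) * hder01 1 g x) (at x within {0..1})"
      using DERIV_image_chain[OF Df Dg] by (simp add: o_def)
    have DP: "((\<lambda>y. prod_list (map (\<lambda>k. hder01 k g y) ks)) has_field_derivative
     sum_list (map (\<lambda>m. prod_list (map (\<lambda>k. hder01 k g x) (ks[m := Suc (ks!m)]))) [0..<length ks])) (at x within {0..1})"
      proof (rule prod_rule)
      fix k assume "k \<in> set ks"
      then have "k < n" using ksi Suc.prems(1) by fastforce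
      then show "(hder01 k g has_real_derivative hder01 (Suc k) g x) (at x within {0..1})"
        using Cn01_deriv[OF Cg] Suc.prems(2) by blast
    qed
    have D: "((\<lambda>y. c * hder01 j f (g y) * prod_list (map (\<lambda>k. hder01 k g y) ks)) has_field_derivative
      c * (hder01 (Suc j) f (g x) * hder01 1 g x) * prod_list (map (\<lambda>k. hder01 k g x) ks) +
      sum_list (map (\<lambda>m. prod_list (map (\<lambda>k. hder01 k g x) (ks[m := Suc (ks!m)]))) [0..<length ks]) * (c * hder01 j f (g x))) (at x within {0..1})"
      by (rule DERIV_mult[OF DERIV_cmult[OF Dfg] DP])
    show ?thesis using D unfolding tt
      by (simp add: evT_def o_def sum_list_const_mult algebra_simps)
  qed
  have "((\<lambda>y. sum_list (map (\<lambda>t. evT f g y t) (FdB i))) has_field_derivative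
      sum_list (map (\<lambda>t. sum_list (map (evT f g x) (stepT t))) (FdB i))) (at x within {0..1})"
    by (rule sum_list_deriv) (use trm in auto)
  then have "hder01 (Suc i) F x = sum_list (map (\<lambda>t. sum_list (map (evT f g x) (stepT t))) (FdB i))"
    by (rule hder01_Suc_eq[OF IH _ Suc.prems(2)])
  then show ?case by (simp add: sum_list_concat_map)
qed




lemma Cn01_bound: assumes "Cn01 m g" shows "\<exists>B. \<forall>i\<le>m. \<forall>x\<in>{0..1}. \<bar>hder01 i g x\<bar> \<le> B"
proof -
  have "\<forall>i. \<exists>B. i \<le> m \<longrightarrow> (\<forall>x\<in>{0..1}. \<bar>hder01 i g x\<bar> \<le> B)"
  proof
    fix i show "\<exists>B. i \<le> m \<longrightarrow> (\<forall>x\<in>{0..1}. \<bar>hder01 i g x\<bar> \<le> B)"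
    proof (cases "i \<le> m")
      case True
      then have "continuous_on {0..1} (hder01 i g)" using assms unfolding Cn01_def by blast
      then obtain B where "\<And>x. x \<in> {0..1::real} \<Longrightarrow> norm (hder01 i g x) \<le> B"
        using continuous_on_compact_bound[of "{0..1::real}"] by blast
      then show ?thesis by (metis atLeastAtMost_iff real_norm_def)
    qed auto
  qed
  then obtain Bf where Bf: "\<And>i. i \<le> m \<Longrightarrow> (\<forall>x\<in>{0..1}. \<bar>hder01 i g x\<bar> \<le> Bf i)" by metis
  have "\<forall>i\<le>m. \<forall>x\<in>{0..1}. \<bar>hder01 i g x\<bar> \<le> Max (Bf ` {..m})"
  proof (intro allI impI ballI)
    fix i x assume "i \<le> m" "x \<in> {0..1::real}"
    then have "\<bar>hder01 i g x\<bar> \<le> Bf i" using Bf by blast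
    also have "Bf i \<le> Max (Bf ` {..m})" using \<open>i \<le> m\<close> by (intro Max_ge) auto
    finally show "\<bar>hder01 i g x\<bar> \<le> Max (Bf ` {..m})" .
  qed
  then show ?thesis by blast
qed

lemma norm_star_ge: assumes "Cn01 m g" "i \<le> m" "x \<in> {0..1}"
  shows "\<bar>hder01 i g x\<bar> \<le> norm_star m g"
proof -
  obtain B where B: "\<forall>i\<le>m. \<forall>x\<in>{0..1}. \<bar>hder01 i g x\<bar> \<le> B" using Cn01_bound[OF assms(1)] by blast
  have bdd: "bdd_above {\<bar>hder01 i g x\<bar> | i x. i \<le> m \<and> x \<in> {0..1}}"
    unfolding bdd_above_def using B by blast
  show ?thesis using cSup_upper[OF _ bdd] assms unfolding norm_star_def by blast
qed

lemma norm_star_le: assumes "\<forall>i\<le>m. \<forall>x\<in>{0..1}. \<bar>hder01 i g x\<bar> \<le> C"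
  shows "norm_star m g \<le> C"
  unfolding norm_star_def
proof (rule cSup_least)
  show "{\<bar>hder01 i g x\<bar> | i x. i \<le> m \<and> x \<in> {0..1}} \<noteq> {}" by force
qed (use assms in blast)

lemma sum_bound: assumes "\<forall>t\<in>set ts. \<bar>E t\<bar> \<le> \<bar>fst t\<bar> * (B::real)"
  shows "\<bar>sum_list (map E ts)\<bar> \<le> sum_list (map (\<lambda>t. \<bar>fst t\<bar>) ts) * B"
  using assms
proof (induction ts)
  case Nil then show ?case by simp
next
  case (Cons a ts)
  have "\<bar>sum_list (map E (a#ts))\<bar> \<le> \<bar>E a\<bar> + \<bar>sum_list (map E ts)\<bar>" by (simp add: abs_triangle_ineq)
  also have "\<dots> \<le> \<bar>fst a\<bar> * B + sum_list (map (\<lambda>t. \<bar>fst t\<bar>) ts) * B" using Cons by (intro add_mono) auto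
  finally show ?case by (simp add: algebra_simps)
qed

lemma prod_bound: assumes "\<forall>k\<in>set ks. \<bar>G k\<bar> \<le> (Gb k::real)"
  shows "\<bar>prod_list (map G ks)\<bar> \<le> prod_list (map Gb ks)"
  using assms
proof (induction ks)
  case Nil then show ?case by simp
next
  case (Cons a ks)
  have "\<bar>G a\<bar> * \<bar>prod_list (map G ks)\<bar> \<le> Gb a * prod_list (map Gb ks)"
    using Cons by (intro mult_mono) auto
  then show ?case by (simp add: abs_mult)
qed

lemma prod_const: "prod_list (map (\<lambda>_. c) ks) = (c::real) ^ length ks"
  by (induction ks) auto

lemma prod_pow: "prod_list (map (\<lambda>k. R / \<delta>^(k^2)) ks) = (R::real)^length ks / \<delta>^(sum_list (map (\<lambda>k. k^2) ks))"
  by (induction ks) (auto simp: power_add)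

lemma FdB_facts: assumes "(c,j,ks) \<in> set (FdB i)"
  shows "j \<le> i" "\<And>k. k \<in> set ks \<Longrightarrow> k \<le> i" "length ks = j" "sum_list (map (\<lambda>k. k^2) ks) \<le> i^2"
proof -
  have inv: "length ks = j \<and> sum_list ks = i \<and> (\<forall>k\<in>set ks. 0<k)" using FdB_inv assms by blast
  show "j \<le> i" using inv length_le_sum_list by metis
  show "\<And>k. k \<in> set ks \<Longrightarrow> k \<le> i" using inv member_le_sum_list by fastforce
  show "length ks = j" using inv by simp
  show "sum_list (map (\<lambda>k. k^2) ks) \<le> i^2" using inv sq_sum_list by metis
qed

lemma boundA:
  assumes t: "t \<in> set (FdB i)" and i: "i \<le> n" and M: "\<forall>j\<le>n. \<bar>hder01 j f (g x)\<bar> \<le> M"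
    and H: "\<forall>k\<le>n. \<bar>hder01 k g x\<bar> \<le> H1" and H1: "1 \<le> H1"
  shows "\<bar>evT f g x t\<bar> \<le> \<bar>fst t\<bar> * (M * H1^n)"
proof -
  obtain c j ks where tt: "t = (c,j,ks)" by (cases t) auto
  note F = FdB_facts[OF t[unfolded tt]]
  have P: "\<bar>prod_list (map (\<lambda>k. hder01 k g x) ks)\<bar> \<le> H1^n"
  proof -
    have "\<bar>prod_list (map (\<lambda>k. hder01 k g x) ks)\<bar> \<le> prod_list (map (\<lambda>_. H1) ks)"
      by (rule prod_bound) (use H F(2) i in force)
    also have "\<dots> = H1 ^ j" using F(3) by (simp add: prod_const)
    also have "\<dots> \<le> H1 ^ n" using F(1) i H1 by (intro power_increasing) auto
    finally show ?thesis .
  qed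
  have Mf: "\<bar>hder01 j f (g x)\<bar> \<le> M" using M F(1) i by auto
  have "\<bar>evT f g x t\<bar> = \<bar>c\<bar> * \<bar>hder01 j f (g x)\<bar> * \<bar>prod_list (map (\<lambda>k. hder01 k g x) ks)\<bar>"
    by (simp add: evT_def tt abs_mult)
  also have "\<dots> \<le> \<bar>c\<bar> * M * H1^n"
    using Mf P by (intro mult_mono) auto
  finally show ?thesis by (simp add: tt)
qed

lemma boundB:
  assumes t: "t \<in> set (FdB i)" and i: "i \<le> n" and K: "\<forall>j\<le>n. \<bar>hder01 j f (g x)\<bar> \<le> K"
    and G: "\<forall>k\<le>n. \<bar>hder01 k g x\<bar> \<le> R / \<delta>^(k^2)" and R: "1 \<le> R" and d: "0 < \<delta>" "\<delta> \<le> 1"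
  shows "\<bar>evT f g x t\<bar> \<le> \<bar>fst t\<bar> * (K * R^n / \<delta>^(n^2))"
proof -
  obtain c j ks where tt: "t = (c,j,ks)" by (cases t) auto
  note F = FdB_facts[OF t[unfolded tt]]
  have P: "\<bar>prod_list (map (\<lambda>k. hder01 k g x) ks)\<bar> \<le> R^n / \<delta>^(n^2)"
  proof -
    have "\<bar>prod_list (map (\<lambda>k. hder01 k g x) ks)\<bar> \<le> prod_list (map (\<lambda>k. R / \<delta>^(k^2)) ks)"
      by (rule prod_bound) (use G F(2) i in force)
    also have "\<dots> = R ^ j / \<delta>^(sum_list (map (\<lambda>k. k^2) ks))" using F(3) by (simp add: prod_pow)
    also have "\<dots> \<le> R ^ n / \<delta>^(n^2)"
    proof (rule frac_le)
      show "0 \<le> R^n" using R by simp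
      show "R^j \<le> R^n" using F(1) i R by (intro power_increasing) auto
      show "0 < \<delta>^(n^2)" using d by simp
      have "sum_list (map (\<lambda>k. k^2) ks) \<le> n^2" using F(4) i
        by (meson le_trans power_mono zero_le)
      then show "\<delta>^(n^2) \<le> \<delta>^(sum_list (map (\<lambda>k. k^2) ks))" using d by (intro power_decreasing) auto
    qed
    finally show ?thesis .
  qed
  have Kf: "\<bar>hder01 j f (g x)\<bar> \<le> K" using K F(1) i by auto
  have "\<bar>evT f g x t\<bar> = \<bar>c\<bar> * \<bar>hder01 j f (g x)\<bar> * \<bar>prod_list (map (\<lambda>k. hder01 k g x) ks)\<bar>"
    by (simp add: evT_def tt abs_mult)
  also have "\<dots> \<le> \<bar>c\<bar> * K * (R^n / \<delta>^(n^2))"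
    using Kf P by (intro mult_mono) auto
  finally show ?thesis by (simp add: tt)
qed




theorem lemma3p4:
  fixes \<rho> :: "nat \<Rightarrow> real"
    and A :: "real \<Rightarrow> real \<Rightarrow> real \<Rightarrow> real"
  assumes hA: "\<And>s \<delta>. admissible s \<delta> \<Longrightarrow>
      smooth_diffeo01 (A s \<delta>) \<and>
      (\<exists>a. smooth_real a \<and> (\<forall>x. a (x + s) = a x) \<and> (\<forall>x. 0 \<le> a x) \<and>
           (\<forall>x\<in>{0..1}. A s \<delta> x = x + a x)) \<and>
      A s \<delta> 0 = 0 \<and> A s \<delta> \<delta> = s - \<delta> \<and> A s \<delta> s = s \<and>
      (\<forall>x\<in>{0..1}. \<delta> / (2 * s) \<le> hder01 1 (A s \<delta>) x \<and> hder01 1 (A s \<delta>) x \<le> 2 * s / \<delta>) \<and>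
      (\<forall>n. dnorm n (A s \<delta>) \<le> \<rho> n / \<delta> ^ (n\<^sup>2))"
  shows "\<forall>n h. diffeo01 n h \<longrightarrow>
           (\<exists>c. \<forall>s \<delta>. admissible s \<delta> \<longrightarrow> dnorm n (A s \<delta> \<circ> h) \<le> c / \<delta> ^ (n\<^sup>2))"
proof (intro allI impI)
  fix n h assume dh: "diffeo01 n h"
  define S :: "real set" where "S = {0..1}"
  define hi where "hi = inv_into S h"
  have bh: "bij_betw h S S" and Ch: "Cn01 n h" and Chi: "Cn01 n hi"
    using dh unfolding diffeo01_def S_def hi_def by auto
  obtain H where H: "\<forall>k\<le>n. \<forall>x\<in>{0..1}. \<bar>hder01 k h x\<bar> \<le> H" using Cn01_bound[OF Ch] by blast
  obtain K where K: "\<forall>k\<le>n. \<forall>x\<in>{0..1}. \<bar>hder01 k hi x\<bar> \<le> K" using Cn01_bound[OF Chi] by blast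
  define H1 where "H1 = max 1 H"
  define R where "R = 1 + (\<Sum>k\<le>n. \<bar>\<rho> k\<bar>)"
  define CFi where "CFi i = sum_list (map (\<lambda>t. \<bar>fst t\<bar>) (FdB i))" for i
  define CF where "CF = (\<Sum>i\<le>n. CFi i)"
  have CFi0: "0 \<le> CFi i" for i unfolding CFi_def by (rule sum_list_nonneg) auto
  have CFi_le: "CFi i \<le> CF" if "i \<le> n" for i
    unfolding CF_def by (rule member_le_sum) (use that CFi0 in auto)
  have H1: "1 \<le> H1" unfolding H1_def by simp
  have R1: "1 \<le> R" unfolding R_def by (simp add: sum_nonneg)
  have Rk: "\<rho> k \<le> R" if "k \<le> n" for k
  proof -
    have "\<bar>\<rho> k\<bar> \<le> (\<Sum>k\<le>n. \<bar>\<rho> k\<bar>)" by (rule member_le_sum) (use that in auto)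
    then show ?thesis unfolding R_def by linarith
  qed
  have K0: "0 \<le> K" using K by (meson abs_ge_zero atLeastAtMost_iff order_trans zero_le order_refl zero_le_one)
  define c where "c = CF * (H1^n * \<bar>\<rho> n\<bar>) + CF * (K * R^n)"
  show "\<exists>c. \<forall>s \<delta>. admissible s \<delta> \<longrightarrow> dnorm n (A s \<delta> \<circ> h) \<le> c / \<delta> ^ (n\<^sup>2)"
  proof (intro exI allI impI)
    fix s \<delta> assume adm: "admissible s \<delta>"
    note hAs = hA[OF adm]
    define Aa where "Aa = A s \<delta>"
    define Ai where "Ai = inv_into S Aa"
    have dA: "diffeo01 m Aa" for m using hAs unfolding smooth_diffeo01_def Aa_def by blast
    have bA: "bij_betw Aa S S" and CA: "Cn01 m Aa" and CAi: "Cn01 m Ai" for m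
      using dA[of m] unfolding diffeo01_def S_def Ai_def by auto
    have dn: "dnorm m Aa \<le> \<rho> m / \<delta>^(m^2)" for m using hAs unfolding Aa_def by blast
    have d0: "0 < \<delta>" and d1: "\<delta> \<le> 1"
    proof -
      obtain k::nat where k: "k > 0" "s = 1 / real k" "\<delta> > 0" "\<delta> < s/2" using adm unfolding admissible_def by blast
      have "s \<le> 1" using k by (simp add: divide_le_eq)
      then show "0 < \<delta>" "\<delta> \<le> 1" using k \<open>s \<le> 1\<close> by linarith+
    qed
    have dpos: "0 < \<delta>^(n^2)" using d0 by simp
    have gS: "g ` S \<subseteq> S" if "bij_betw g S S" for g using that bij_betw_imp_surj_on by blast
    have biA: "bij_betw Ai S S" unfolding Ai_def by (rule bij_betw_inv_into[OF bA])
    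
    have na: "norm_star n (Aa \<circ> h) \<le> CF * (H1^n * \<bar>\<rho> n\<bar>) / \<delta>^(n^2)"
    proof (rule norm_star_le, intro allI impI ballI)
      fix i x assume i: "i \<le> n" and x: "x \<in> {0..1::real}"
      have hx: "h x \<in> {0..1}" using gS[OF bh] x unfolding S_def by blast
      have eq: "hder01 i (Aa \<circ> h) x = sum_list (map (evT Aa h x) (FdB i))"
        by (rule chain_FdB[OF CA Ch _ _ i x]) (use gS[OF bh] in \<open>auto simp: S_def\<close>)
      have M: "\<forall>j\<le>n. \<bar>hder01 j Aa (h x)\<bar> \<le> \<bar>\<rho> n\<bar> / \<delta>^(n^2)"
      proof (intro allI impI)
        fix j assume "j \<le> n"
        then have "\<bar>hder01 j Aa (h x)\<bar> \<le> norm_star n Aa" using norm_star_ge[OF CA _ hx] by blast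
        also have "\<dots> \<le> dnorm n Aa" unfolding dnorm_def by simp
        also have "\<dots> \<le> \<rho> n / \<delta>^(n^2)" by (rule dn)
        also have "\<dots> \<le> \<bar>\<rho> n\<bar> / \<delta>^(n^2)" using dpos by (intro divide_right_mono) auto
        finally show "\<bar>hder01 j Aa (h x)\<bar> \<le> \<bar>\<rho> n\<bar> / \<delta>^(n^2)" .
      qed
      have HH: "\<forall>k\<le>n. \<bar>hder01 k h x\<bar> \<le> H1" using H x unfolding H1_def by force
      have "\<bar>sum_list (map (evT Aa h x) (FdB i))\<bar> \<le> CFi i * (\<bar>\<rho> n\<bar> / \<delta>^(n^2) * H1^n)"
        unfolding CFi_def by (rule sum_bound) (use boundA[OF _ i M HH H1] in blast)
      also have "\<dots> \<le> CF * (\<bar>\<rho> n\<bar> / \<delta>^(n^2) * H1^n)"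
        using CFi_le[OF i] dpos H1 by (intro mult_right_mono) auto
      finally show "\<bar>hder01 i (Aa \<circ> h) x\<bar> \<le> CF * (H1^n * \<bar>\<rho> n\<bar>) / \<delta>^(n^2)"
        using eq by (simp add: algebra_simps)
    qed
    
    have inv_eq: "inv_into S (Aa \<circ> h) y = hi (Ai y)" if y: "y \<in> S" for y
    proof (rule inv_into_f_eq)
      show "inj_on (Aa \<circ> h) S" using bij_betw_trans[OF bh bA] bij_betw_imp_inj_on by blast
      have "Ai y \<in> S" using gS[OF biA] y by blast
      then show "hi (Ai y) \<in> S" using gS[OF bij_betw_inv_into[OF bh]] unfolding hi_def by blast
      have "h (hi (Ai y)) = Ai y" unfolding hi_def
        by (rule f_inv_into_f) (use \<open>Ai y \<in> S\<close> bh bij_betw_imp_surj_on in blast)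
      moreover have "Aa (Ai y) = y" unfolding Ai_def
        by (rule f_inv_into_f) (use y bA bij_betw_imp_surj_on in blast)
      ultimately show "(Aa \<circ> h) (hi (Ai y)) = y" by simp
    qed
    have nb: "norm_star n (inv_into S (Aa \<circ> h)) \<le> CF * (K * R^n) / \<delta>^(n^2)"
    proof (rule norm_star_le, intro allI impI ballI)
      fix i x assume i: "i \<le> n" and x: "x \<in> {0..1::real}"
      have ax: "Ai x \<in> {0..1}" using gS[OF biA] x unfolding S_def by blast
      have eq: "hder01 i (inv_into S (Aa \<circ> h)) x = sum_list (map (evT hi Ai x) (FdB i))"
        by (rule chain_FdB[OF Chi CAi _ _ i x]) (use gS[OF biA] inv_eq in \<open>auto simp: S_def\<close>)
      have KK: "\<forall>j\<le>n. \<bar>hder01 j hi (Ai x)\<bar> \<le> K" using K ax by blast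
      have G: "\<forall>k\<le>n. \<bar>hder01 k Ai x\<bar> \<le> R / \<delta>^(k^2)"
      proof (intro allI impI)
        fix k assume k: "k \<le> n"
        have "\<bar>hder01 k Ai x\<bar> \<le> norm_star k Ai" using norm_star_ge[OF CAi order_refl x] .
        also have "\<dots> \<le> dnorm k Aa" unfolding dnorm_def Ai_def S_def by simp
        also have "\<dots> \<le> \<rho> k / \<delta>^(k^2)" by (rule dn)
        also have "\<dots> \<le> R / \<delta>^(k^2)" using Rk[OF k] d0 by (intro divide_right_mono) auto
        finally show "\<bar>hder01 k Ai x\<bar> \<le> R / \<delta>^(k^2)" .
      qed
      have "\<bar>sum_list (map (evT hi Ai x) (FdB i))\<bar> \<le> CFi i * (K * R^n / \<delta>^(n^2))"
        unfolding CFi_def by (rule sum_bound) (use boundB[OF _ i KK G R1 d0 d1] in blast)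
      also have "\<dots> \<le> CF * (K * R^n / \<delta>^(n^2))"
        using CFi_le[OF i] dpos R1 K0 by (intro mult_right_mono) auto
      finally show "\<bar>hder01 i (inv_into S (Aa \<circ> h)) x\<bar> \<le> CF * (K * R^n) / \<delta>^(n^2)"
        using eq by (simp add: algebra_simps)
    qed
    have CF0: "0 \<le> CF" unfolding CF_def by (rule sum_nonneg) (use CFi0 in auto)
    have "dnorm n (Aa \<circ> h) \<le> c / \<delta>^(n^2)"
    proof -
      have a: "CF * (H1^n * \<bar>\<rho> n\<bar>) / \<delta>^(n^2) \<le> c / \<delta>^(n^2)"
        unfolding c_def using CF0 K0 R1 dpos by (intro divide_right_mono) auto
      have b: "CF * (K * R^n) / \<delta>^(n^2) \<le> c / \<delta>^(n^2)"
        unfolding c_def using CF0 H1 dpos by (intro divide_right_mono) auto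
      show ?thesis unfolding dnorm_def using na nb a b unfolding S_def by simp
    qed
    then show "dnorm n (A s \<delta> \<circ> h) \<le> c / \<delta>^(n\<^sup>2)" unfolding Aa_def .
  qed
qed


end
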